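(* Assume the standing assumptions below (Assumption A). Let $\alpha>0$, let $\varphi_i\in X_\alpha$ with $\varphi_i\ge0$ and $\tau_{i0}>0$ for $i=1,\dots,n$. Then the corresponding solution $(A_1,\dots,A_n)$ of the $n$-species system (S) is bounded on $[0,+\infty)$.
   Context: For $\alpha>0$, $X_\alpha:=\{\phi\in C((-\infty,0]): e^{-\alpha|\cdot|}\phi(\cdot)\in BUC((-\infty,0])\cap \mathrm{Lip}((-\infty,0])\}$ ($BUC$: bounded uniformly continuous, $\mathrm{Lip}$: Lipschitz). The $n$-species system (S): for $i=1,\dots,n$, $$A_i'(t)=-\mu_{A_i}A_i(t)+\beta_i e^{-\mu_{J_i}\tau_i(t)}\frac{f_i(Z_i(t))}{f_i(Z_i(t-\tau_i(t)))}A_i(t-\tau_i(t)),\quad t\ge0,$$ $$\int_{t-\tau_i(t)}^{t}f_i(Z_i(\sigma))\,d\sigma=\int_{-\tau_{i0}}^{0}f_i(Z_{i\varphi}(\sigma))\,d\sigma,\quad t\ge0,$$ with $A_i(t)=\varphi_i(t)$ for $t\le0$, $\tau_i(0)=\tau_{i0}\ge0$, where $Z_i(t)=\sum_{j=1}^n\zeta_{ij}A_j(t)$, $Z_{i\varphi}(t)=\sum_{j=1}^n\zeta_{ij}\varphi_j(t)$, $\zeta_{ij}\ge0$. A solution consists of continuous $A_i:\mathbb{R}\to[0,\infty)$, differentiable on $[0,\infty)$, and $\tau_i:[0,\infty)\to[0,\infty)$ satisfying these equations for all $t\ge0$. Assumption A: for each $i$, (i) $\mu_{A_i}>0$, $\mu_{J_i}>0$,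 $\beta_i>0$, $\zeta_{ii}>0$; (ii) $f_i:\mathbb{R}\to(0,\infty)$ is Lipschitz continuous and continuously differentiable with $f_i>0$, $f_i'\le0$ on $\mathbb{R}$, $\lim_{x\to+\infty}f_i(x)=0$, and $\sup_{x\ge0}\frac{f_i(x)}{f_i(cx)}<+\infty$ for every $c\ge1$. *)

theory Defs
  imports "HOL-Analysis.Analysis"
begin

definition X_alpha :: "real \<Rightarrow> (real \<Rightarrow> real) \<Rightarrow> bool" where
  "X_alpha \<alpha> \<phi> \<longleftrightarrow>
     continuous_on {..0} \<phi> \<and>
     (let g = (\<lambda>s. exp (- \<alpha> * \<bar>s\<bar>) * \<phi> s) in
        bounded (g ` {..0}) \<and> uniformly_continuous_on {..0} g \<and>
        (\<exists>L. L-lipschitz_on {..0} g))"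

definition assumption_A ::
  "nat \<Rightarrow> (nat \<Rightarrow> real) \<Rightarrow> (nat \<Rightarrow> real) \<Rightarrow> (nat \<Rightarrow> real) \<Rightarrow>
   (nat \<Rightarrow> nat \<Rightarrow> real) \<Rightarrow> (nat \<Rightarrow> real \<Rightarrow> real) \<Rightarrow> bool" where
  "assumption_A n muA muJ beta zeta f \<longleftrightarrow>
     (\<forall>i<n. muA i > 0 \<and> muJ i > 0 \<and> beta i > 0 \<and> zeta i i > 0 \<and>
        (\<forall>j<n. zeta i j \<ge> 0) \<and>
        (\<exists>L. L-lipschitz_on UNIV (f i)) \<and>
        (\<exists>f'. (\<forall>x. (f i has_real_derivative f' x) (at x)) \<and> continuous_on UNIV f' \<and>
              (\<forall>x. f' x \<le> 0)) \<and>
        (\<forall>x. f i x > 0) \<and>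
        ((f i) \<longlongrightarrow> 0) at_top \<and>
        (\<forall>c\<ge>1. bdd_above ((\<lambda>x. f i x / f i (c * x)) ` {0..})))"

definition Zsum :: "nat \<Rightarrow> (nat \<Rightarrow> nat \<Rightarrow> real) \<Rightarrow> (nat \<Rightarrow> real \<Rightarrow> real) \<Rightarrow> nat \<Rightarrow> real \<Rightarrow> real" where
  "Zsum n zeta A i t = (\<Sum>j<n. zeta i j * A j t)"

definition is_solution_S ::
  "nat \<Rightarrow> (nat \<Rightarrow> real) \<Rightarrow> (nat \<Rightarrow> real) \<Rightarrow> (nat \<Rightarrow> real) \<Rightarrow>
   (nat \<Rightarrow> nat \<Rightarrow> real) \<Rightarrow> (nat \<Rightarrow> real \<Rightarrow> real) \<Rightarrow>
   (nat \<Rightarrow> real \<Rightarrow> real) \<Rightarrow> (nat \<Rightarrow> real) \<Rightarrow>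
   (nat \<Rightarrow> real \<Rightarrow> real) \<Rightarrow> (nat \<Rightarrow> real \<Rightarrow> real) \<Rightarrow> bool" where
  "is_solution_S n muA muJ beta zeta f \<phi> tau0 A \<tau> \<longleftrightarrow>
     (\<forall>i<n.
        continuous_on UNIV (A i) \<and>
        (\<forall>t. A i t \<ge> 0) \<and>
        (\<forall>t\<le>0. A i t = \<phi> i t) \<and>
        \<tau> i 0 = tau0 i \<and>
        (\<forall>t\<ge>0. \<tau> i t \<ge> 0) \<and>
        (\<forall>t\<ge>0. (A i has_real_derivative
             (- muA i * A i t
              + beta i * exp (- muJ i * \<tau> i t)
                * (f i (Zsum n zeta A i t) / f i (Zsum n zeta A i (t - \<tau> i t)))
                * A i (t - \<tau> i t))) (at t within {0..})) \<and>
        (\<forall>t\<ge>0. integral {t - \<tau> i t..t} (\<lambda>s. f i (Zsum n zeta A i s))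
                 = integral {- tau0 i..0} (\<lambda>s. f i (Zsum n zeta \<phi> i s))))"

end

theory Submission
  imports Defs
begin

lemma integral_pos_cont:
  fixes g :: "real \<Rightarrow> real"
  assumes "continuous_on {a..b} g" "a < b" "\<And>x. x \<in> {a..b} \<Longrightarrow> g x > 0"
  shows "integral {a..b} g > 0"
proof -
  obtain x0 where x0: "x0 \<in> {a..b}" "\<And>y. y \<in> {a..b} \<Longrightarrow> g x0 \<le> g y"
    using continuous_attains_inf[of "{a..b}" g] assms(1,2) by auto
  have "integral {a..b} (\<lambda>x. g x0) \<le> integral {a..b} g"
    by (rule integral_le) (auto intro: integrable_continuous_interval assms(1) x0(2))
  moreover have "integral {a..b} (\<lambda>x. g x0) = (b - a) * g x0" using assms(2) by simp
  moreover have "(b - a) * g x0 > 0" using assms(2,3) x0(1) by simp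
  ultimately show ?thesis by linarith
qed

lemma integral_le_const_bound:
  fixes g :: "real \<Rightarrow> real"
  assumes "continuous_on {a..b} g" "a \<le> b" "\<And>x. x \<in> {a..b} \<Longrightarrow> g x \<le> C"
  shows "integral {a..b} g \<le> (b - a) * C"
proof -
  have "integral {a..b} g \<le> integral {a..b} (\<lambda>x. C)"
    by (rule integral_le) (auto intro: integrable_continuous_interval assms(1) assms(3))
  thus ?thesis using assms(2) by simp
qed

lemma antitone_from_deriv:
  fixes g :: "real \<Rightarrow> real"
  assumes "\<forall>x. (g has_real_derivative g' x) (at x)" "\<forall>x. g' x \<le> 0" "x \<le> y"
  shows "g y \<le> g x"
  using DERIV_nonpos_imp_nonincreasing[of x y g] assms by blast

lemma finite_bound:
  fixes P :: "nat \<Rightarrow> real \<Rightarrow> bool"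
  assumes "\<forall>j<n. \<exists>b. \<forall>M\<ge>b. P j M"
  shows "\<exists>b\<ge>0. \<forall>j<n. \<forall>M\<ge>b. P j M"
proof -
  obtain B where B: "\<forall>j<n. \<forall>M\<ge>B j. P j M" using assms by metis
  show ?thesis
  proof (intro exI[of _ "\<Sum>j<n. \<bar>B j\<bar>"] conjI allI impI)
    fix j M assume j: "j < n" and M: "(\<Sum>j<n. \<bar>B j\<bar>) \<le> M"
    have "B j \<le> \<bar>B j\<bar>" by simp
    also have "\<bar>B j\<bar> \<le> (\<Sum>j<n. \<bar>B j\<bar>)" by (rule member_le_sum) (use j in auto)
    finally show "P j M" using B j M by auto
  qed (simp add: sum_nonneg)
qed

lemma species:
  fixes n :: nat and muA muJ beta :: "nat \<Rightarrow> real" and zeta :: "nat \<Rightarrow> nat \<Rightarrow> real"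
    and f :: "nat \<Rightarrow> real \<Rightarrow> real" and \<phi> :: "nat \<Rightarrow> real \<Rightarrow> real"
    and tau0 :: "nat \<Rightarrow> real" and A \<tau> :: "nat \<Rightarrow> real \<Rightarrow> real"
  assumes AA: "assumption_A n muA muJ beta zeta f"
    and sol: "is_solution_S n muA muJ beta zeta f \<phi> tau0 A \<tau>"
    and i: "i < n" and t0: "tau0 i > 0"
    and Phi0: "\<Phi> \<ge> 0" and Phi: "\<forall>j<n. \<forall>t\<in>{-D..0}. A j t \<le> \<Phi>" and D: "tau0 i \<le> D"
  shows "\<exists>b. \<forall>M\<ge>b. \<forall>ts>0. (\<forall>j<n. \<forall>s\<in>{0..<ts}. A j s < M) \<longrightarrow> M \<le> A i ts \<longrightarrow> \<Phi> < M \<longrightarrow> False"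
proof -
  have muA: "muA i > 0" and muJ: "muJ i > 0" and be: "beta i > 0" and ze: "zeta i i > 0"
    and zn: "\<forall>j<n. zeta i j \<ge> 0" and fpos: "\<forall>x. f i x > 0"
    and ftend: "(f i \<longlongrightarrow> 0) at_top"
    and fbdd: "\<forall>c\<ge>1. bdd_above ((\<lambda>x. f i x / f i (c * x)) ` {0..})"
    using AA i unfolding assumption_A_def by auto
  obtain f' where f': "\<forall>x. (f i has_real_derivative f' x) (at x)" "\<forall>x. f' x \<le> 0"
    using AA i unfolding assumption_A_def by blast
  have fanti: "\<And>x y. x \<le> y \<Longrightarrow> f i y \<le> f i x"
    using antitone_from_deriv[OF f'] by blast
  have fcont: "continuous_on UNIV (f i)"
    using f'(1) by (metis continuous_at_imp_continuous_on DERIV_isCont)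
  have Acont: "\<forall>j<n. continuous_on UNIV (A j)" and Anon: "\<forall>j<n. \<forall>t. A j t \<ge> 0"
    and Aphi: "\<forall>j<n. \<forall>t\<le>0. A j t = \<phi> j t"
    using sol unfolding is_solution_S_def by auto
  have taunn: "\<forall>t\<ge>0. \<tau> i t \<ge> 0" using sol i unfolding is_solution_S_def by auto
  define Z where "Z = Zsum n zeta A i"
  have der: "\<forall>t\<ge>0. (A i has_real_derivative
             (- muA i * A i t
              + beta i * exp (- muJ i * \<tau> i t)
                * (f i (Z t) / f i (Z (t - \<tau> i t)))
                * A i (t - \<tau> i t))) (at t within {0..})"
    using sol i unfolding is_solution_S_def Z_def by auto
  have inteq0: "\<forall>t\<ge>0. integral {t - \<tau> i t..t} (\<lambda>s. f i (Z s))
                 = integral {- tau0 i..0} (\<lambda>s. f i (Zsum n zeta \<phi> i s))"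
    using sol i unfolding is_solution_S_def Z_def by auto
  have Zcont: "continuous_on UNIV Z"
    unfolding Z_def Zsum_def using Acont
    by (intro continuous_on_sum continuous_on_mult continuous_on_const) auto
  have FZcont: "continuous_on S (\<lambda>s. f i (Z s))" for S
    by (rule continuous_on_compose2[OF fcont continuous_on_subset[OF Zcont]]) auto
  have Zge: "zeta i i * A i s \<le> Z s" for s
    unfolding Z_def Zsum_def
    by (rule member_le_sum[of i "{..<n}" "\<lambda>j. zeta i j * A j s"]) (use i zn Anon in auto)
  define K where "K = (\<Sum>j<n. zeta i j)"
  have KZ: "zeta i i \<le> K"
    unfolding K_def by (rule member_le_sum) (use i zn in auto)
  have Zle: "Z s \<le> K * M" if "\<forall>j<n. A j s \<le> M" for s M
  proof -
    have "Z s \<le> (\<Sum>j<n. zeta i j * M)"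
      unfolding Z_def Zsum_def by (rule sum_mono) (use that zn in \<open>auto intro: mult_left_mono\<close>)
    thus ?thesis unfolding K_def by (simp add: sum_distrib_right)
  qed
  have Zphi: "Zsum n zeta \<phi> i s = Z s" if "s \<le> 0" for s
    unfolding Z_def Zsum_def using Aphi that by (intro sum.cong) auto
  define c where "c = integral {- tau0 i..0} (\<lambda>s. f i (Z s))"
  have ceq: "integral {- tau0 i..0} (\<lambda>s. f i (Zsum n zeta \<phi> i s)) = c"
    unfolding c_def by (rule integral_cong) (simp add: Zphi)
  have inteq: "\<forall>t\<ge>0. integral {t - \<tau> i t..t} (\<lambda>s. f i (Z s)) = c" using inteq0 ceq by simp
  have cpos: "c > 0" unfolding c_def
    by (rule integral_pos_cont[OF FZcont]) (use t0 fpos in auto)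
  have Lt: "t - \<tau> i t < t" if "t \<ge> 0" for t
  proof (rule ccontr)
    assume "\<not> ?thesis"
    hence "\<tau> i t = 0" using taunn that by fastforce
    hence "integral {t - \<tau> i t..t} (\<lambda>s. f i (Z s)) = 0" by simp
    thus False using inteq that cpos by simp
  qed
  have Lge: "- tau0 i \<le> t - \<tau> i t" if t: "t \<ge> 0" for t
  proof (rule ccontr)
    assume "\<not> ?thesis"
    hence L: "t - \<tau> i t < - tau0 i" by simp
    define L where "L = t - \<tau> i t"
    have I: "(\<lambda>s. f i (Z s)) integrable_on {a..b}" for a b
      by (rule integrable_continuous_interval[OF FZcont])
    have "integral {L..- tau0 i} (\<lambda>s. f i (Z s)) + integral {- tau0 i..t} (\<lambda>s. f i (Z s))
          = integral {L..t} (\<lambda>s. f i (Z s))"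
      by (rule Henstock_Kurzweil_Integration.integral_combine) (use L L_def t0 t I in auto)
    moreover have "integral {- tau0 i..0} (\<lambda>s. f i (Z s)) + integral {0..t} (\<lambda>s. f i (Z s))
          = integral {- tau0 i..t} (\<lambda>s. f i (Z s))"
      by (rule Henstock_Kurzweil_Integration.integral_combine) (use t0 t I in auto)
    moreover have "integral {0..t} (\<lambda>s. f i (Z s)) \<ge> 0"
      by (rule integral_nonneg[OF I]) (use fpos less_imp_le in auto)
    moreover have "integral {L..- tau0 i} (\<lambda>s. f i (Z s)) > 0"
      by (rule integral_pos_cont[OF FZcont]) (use L L_def fpos in auto)
    moreover have "integral {L..t} (\<lambda>s. f i (Z s)) = c" using inteq t L_def by simp
    ultimately show False unfolding c_def by linarith
  qed
  obtain B0 where B0: "\<forall>x\<ge>0. f i x / f i ((K / zeta i i) * x) \<le> B0"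
  proof -
    have "K / zeta i i \<ge> 1" using KZ ze by simp
    then obtain B0 where "\<forall>y\<in>(\<lambda>x. f i x / f i ((K / zeta i i) * x)) ` {0..}. y \<le> B0"
      using fbdd unfolding bdd_above_def by blast
    thus ?thesis using that by auto
  qed
  define B1 where "B1 = max B0 1"
  have B1pos: "B1 > 0" unfolding B1_def by simp
  have B1: "\<forall>x\<ge>0. f i x / f i ((K / zeta i i) * x) \<le> B1" using B0 unfolding B1_def by force
  define T where "T = beta i * B1 / (muA i * muJ i)"
  have Tpos: "T > 0" unfolding T_def using be B1pos muA muJ by simp
  have expT: "exp (muJ i * T) > beta i * B1 / muA i"
  proof -
    have "muJ i * T = beta i * B1 / muA i" unfolding T_def using muJ by (simp add: field_simps)
    moreover have "exp (muJ i * T) > muJ i * T"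
      using exp_ge_add_one_self[of "muJ i * T"] by linarith
    ultimately show ?thesis by simp
  qed
  define \<kappa> where "\<kappa> = zeta i i * muA i * exp (- muA i * T) / (beta i * B1)"
  have kpos: "\<kappa> > 0" unfolding \<kappa>_def using ze muA be B1pos by simp
  have "\<forall>\<^sub>F x in at_top. f i x < c / T"
    by (rule order_tendstoD(2)[OF ftend]) (use cpos Tpos in simp)
  then obtain X where X: "\<And>x. x \<ge> X \<Longrightarrow> f i x < c / T"
    unfolding eventually_at_top_linorder by blast
  define b where "b = max (beta i * B1 * \<Phi> / muA i + 1) (X / \<kappa>)"
  show ?thesis
  proof (intro exI[of _ b] allI impI)
    fix M ts
    assume Mb: "b \<le> M" and ts: "ts > 0" and hyp: "\<forall>j<n. \<forall>s\<in>{0..<ts}. A j s < M"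
      and Mts: "M \<le> A i ts" and PM: "\<Phi> < M"
    have Mpos: "M > 0" using PM Phi0 by simp
    define tau where "tau = \<tau> i ts"
    define L where "L = ts - tau"
    define a where "a = A i L"
    have LL: "L < ts" "- tau0 i \<le> L" using Lt Lge ts unfolding L_def tau_def by auto
    have tau0': "tau \<ge> 0" using taunn ts unfolding tau_def by auto
    have AjL: "\<forall>j<n. A j L \<le> M"
    proof (intro allI impI)
      fix j assume j: "j < n"
      show "A j L \<le> M"
      proof (cases "L < 0")
        case True
        hence "L \<in> {-D..0}" using LL D by auto
        thus ?thesis using Phi j PM by force
      next
        case False
        hence "L \<in> {0..<ts}" using LL by auto
        thus ?thesis using hyp j by (meson less_imp_le)
      qed
    qed
    have a0: "a \<ge> 0" "a \<le> M" using Anon AjL i unfolding a_def by auto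
    define l where "l = - muA i * A i ts + beta i * exp (- muJ i * tau)
                * (f i (Z ts) / f i (Z L)) * a"
    have dts: "(A i has_real_derivative l) (at ts)"
    proof -
      have "ts \<in> interior {0..}" using ts by simp
      hence eq: "at ts within {0..} = at ts" by (rule at_within_interior)
      have "(A i has_real_derivative l) (at ts within {0..})"
        using der[rule_format, OF less_imp_le[OF ts]] unfolding l_def a_def L_def tau_def .
      thus ?thesis unfolding eq .
    qed
    have lnn: "l \<ge> 0"
    proof (rule ccontr)
      assume "\<not> l \<ge> 0"
      then obtain d where d: "d > 0" "\<And>h. h > 0 \<Longrightarrow> h < d \<Longrightarrow> A i ts < A i (ts - h)"
        using DERIV_neg_dec_left[OF dts] by force
      define h where "h = min (d/2) (ts/2)"
      have "A i ts < A i (ts - h)" using d ts unfolding h_def by (intro d(2)) auto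
      moreover have "A i (ts - h) < M" using hyp i ts d unfolding h_def by auto
      ultimately show False using Mts by simp
    qed
    have R: "f i (Z ts) / f i (Z L) \<le> B1"
    proof -
      have "zeta i i * M \<le> Z ts" using Zge[of ts] Mts ze by (smt (verit) mult_left_mono)
      hence "f i (Z ts) \<le> f i (zeta i i * M)" by (rule fanti)
      moreover have "f i (K * M) \<le> f i (Z L)" using Zle[OF AjL] by (rule fanti)
      ultimately have "f i (Z ts) / f i (Z L) \<le> f i (zeta i i * M) / f i (K * M)"
        using fpos by (intro frac_le) (auto simp: less_imp_le)
      also have "\<dots> = f i (zeta i i * M) / f i ((K / zeta i i) * (zeta i i * M))"
        using ze by simp
      also have "\<dots> \<le> B1" using B1[rule_format, of "zeta i i * M"] ze Mpos
        by (simp del: times_divide_eq_left times_divide_eq_right)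
      finally show ?thesis .
    qed
    have Rnn: "f i (Z ts) / f i (Z L) \<ge> 0" using fpos by (simp add: less_imp_le)
    have key: "muA i * M \<le> beta i * exp (- muJ i * tau) * B1 * a"
    proof -
      have "muA i * M \<le> muA i * A i ts" using Mts muA by simp
      also have "\<dots> \<le> beta i * exp (- muJ i * tau) * (f i (Z ts) / f i (Z L)) * a"
        using lnn unfolding l_def by simp
      also have "\<dots> \<le> beta i * exp (- muJ i * tau) * B1 * a"
        using R a0 be by (intro mult_right_mono mult_left_mono) auto
      finally show ?thesis .
    qed
    have e1: "exp (- muJ i * tau) \<le> 1" using muJ tau0' by simp
    have key2: "muA i * M \<le> beta i * B1 * a"
    proof -
      have "beta i * exp (- muJ i * tau) * B1 * a \<le> beta i * 1 * B1 * a"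
        using e1 be B1pos a0 by (intro mult_right_mono mult_left_mono) auto
      thus ?thesis using key by simp
    qed
    show False
    proof (cases "L < 0")
      case True
      hence "a \<le> \<Phi>" using LL D Phi i unfolding a_def by force
      hence "muA i * M \<le> beta i * B1 * \<Phi>" using key2 be B1pos
        by (smt (verit) mult_left_mono mult_pos_pos)
      moreover have "M > beta i * B1 * \<Phi> / muA i" using Mb unfolding b_def by simp
      ultimately show False using muA by (simp add: field_simps)
    next
      case False
      hence L0: "L \<ge> 0" by simp
      have tauT: "tau < T"
      proof (rule ccontr)
        assume "\<not> tau < T"
        hence "exp (muJ i * T) \<le> exp (muJ i * tau)" using muJ by simp
        hence big: "exp (muJ i * tau) > beta i * B1 / muA i" using expT by linarith
        have "exp (muJ i * tau) * (muA i * M) \<le> exp (muJ i * tau) * (beta i * exp (- muJ i * tau) * B1 * a)"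
          using key by simp
        also have "\<dots> = beta i * B1 * a" by (simp add: exp_minus field_simps)
        also have "\<dots> \<le> beta i * B1 * M" using a0 be B1pos by simp
        finally have "exp (muJ i * tau) * muA i \<le> beta i * B1" using Mpos by (simp add: mult.assoc)
        thus False using big muA by (simp add: field_simps)
      qed
      have mono: "a * exp (- muA i * (s - L)) \<le> A i s" if s: "s \<in> {L..ts}" for s
      proof -
        have "A i L * exp (muA i * L) \<le> A i s * exp (muA i * s)"
        proof (rule DERIV_nonneg_imp_increasing_open[of L s "\<lambda>x. A i x * exp (muA i * x)"])
          show "L \<le> s" using s by simp
          show "continuous_on {L..s} (\<lambda>x. A i x * exp (muA i * x))"
          proof -
            have "continuous_on UNIV (A i)" using Acont i by simp
            hence "continuous_on UNIV (\<lambda>x. A i x * exp (muA i * x))"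
              by (intro continuous_intros)
            thus ?thesis by (rule continuous_on_subset) simp
          qed
          fix x assume x: "L < x" "x < s"
          hence xpos: "x > 0" using L0 by simp
          have "at x within {0..} = at x" using xpos by (intro at_within_interior) simp
          hence dA: "(A i has_real_derivative
             (- muA i * A i x + beta i * exp (- muJ i * \<tau> i x)
                * (f i (Z x) / f i (Z (x - \<tau> i x))) * A i (x - \<tau> i x))) (at x)"
            using der[rule_format, OF less_imp_le[OF xpos]] by simp
          define br where "br = beta i * exp (- muJ i * \<tau> i x)
                * (f i (Z x) / f i (Z (x - \<tau> i x))) * A i (x - \<tau> i x)"
          have brn: "br \<ge> 0" unfolding br_def using be fpos Anon i
            by (intro mult_nonneg_nonneg divide_nonneg_nonneg) (auto simp: less_imp_le)
          have dE: "((\<lambda>x. exp (muA i * x)) has_real_derivative exp (muA i * x) * muA i) (at x)"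
            by (auto intro!: derivative_eq_intros)
          have "((\<lambda>x. A i x * exp (muA i * x)) has_real_derivative
              ((- muA i * A i x + br) * exp (muA i * x) + exp (muA i * x) * muA i * A i x)) (at x)"
            using DERIV_mult[OF dA dE] unfolding br_def by simp
          moreover have "(- muA i * A i x + br) * exp (muA i * x) + exp (muA i * x) * muA i * A i x
               = br * exp (muA i * x)" by (simp add: algebra_simps)
          ultimately show "\<exists>y. ((\<lambda>x. A i x * exp (muA i * x)) has_real_derivative y) (at x) \<and> 0 \<le> y"
            using brn by (intro exI[of _ "br * exp (muA i * x)"]) auto
        qed
        hence h1: "A i L * exp (muA i * L) / exp (muA i * s) \<le> A i s"
          by (simp add: divide_le_eq)
        have e: "exp (- muA i * (s - L)) = exp (muA i * L) / exp (muA i * s)"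
          by (subst exp_diff[symmetric]) (rule arg_cong[where f=exp], simp add: algebra_simps)
        show ?thesis unfolding a_def e using h1 by (simp add: times_divide_eq_right)
      qed
      have Zlow: "\<kappa> * M \<le> Z s" if s: "s \<in> {L..ts}" for s
      proof -
        have "exp (- muA i * T) \<le> exp (- muA i * (s - L))"
          using s tauT muA unfolding L_def by simp
        hence "a * exp (- muA i * T) \<le> A i s" using mono[OF s] a0
          by (smt (verit) mult_left_mono)
        moreover have "muA i * M * exp (- muA i * T) / (beta i * B1) \<le> a * exp (- muA i * T)"
          using key2 be B1pos by (simp add: divide_le_eq mult.commute mult.left_commute)
        ultimately have "muA i * M * exp (- muA i * T) / (beta i * B1) \<le> A i s" by linarith
        hence "zeta i i * (muA i * M * exp (- muA i * T) / (beta i * B1)) \<le> zeta i i * A i s"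
          using ze by (intro mult_left_mono) auto
        moreover have "zeta i i * (muA i * M * exp (- muA i * T) / (beta i * B1)) = \<kappa> * M"
          unfolding \<kappa>_def by simp
        ultimately show ?thesis using Zge[of s] by linarith
      qed
      have XM: "X \<le> \<kappa> * M"
      proof -
        have "X / \<kappa> \<le> M" using Mb unfolding b_def by simp
        thus ?thesis using kpos by (simp add: divide_le_eq mult.commute)
      qed
      have fb: "f i (Z s) \<le> f i (\<kappa> * M)" if "s \<in> {L..ts}" for s
        using fanti[OF Zlow[OF that]] .
      have "c = integral {L..ts} (\<lambda>s. f i (Z s))" using inteq ts unfolding L_def tau_def by simp
      also have "\<dots> \<le> (ts - L) * f i (\<kappa> * M)"
        by (rule integral_le_const_bound[OF FZcont]) (use LL fb in auto)
      also have "\<dots> \<le> T * f i (\<kappa> * M)"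
        using tauT fpos unfolding L_def by (intro mult_right_mono) (auto simp: less_imp_le)
      also have "\<dots> < T * (c / T)" using X[OF XM] Tpos by (intro mult_strict_left_mono)
      also have "\<dots> = c" using Tpos by simp
      finally show False by simp
    qed
  qed
qed


theorem theorem1p5:
  fixes n :: nat
    and muA muJ beta :: "nat \<Rightarrow> real"
    and zeta :: "nat \<Rightarrow> nat \<Rightarrow> real"
    and f :: "nat \<Rightarrow> real \<Rightarrow> real"
    and \<alpha> :: real
    and \<phi> :: "nat \<Rightarrow> real \<Rightarrow> real"
    and tau0 :: "nat \<Rightarrow> real"
    and A \<tau> :: "nat \<Rightarrow> real \<Rightarrow> real"
  assumes "assumption_A n muA muJ beta zeta f"
    and "\<alpha> > 0"
    and "\<forall>i<n. X_alpha \<alpha> (\<phi> i)"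
    and "\<forall>i<n. \<forall>t\<le>0. \<phi> i t \<ge> 0"
    and "\<forall>i<n. tau0 i > 0"
    and "is_solution_S n muA muJ beta zeta f \<phi> tau0 A \<tau>"
  shows "\<exists>M. \<forall>i<n. \<forall>t\<ge>0. \<bar>A i t\<bar> \<le> M"
proof -
  note AA = assms(1) and sol = assms(6) and t0 = assms(5)
  have Acont: "\<forall>j<n. continuous_on UNIV (A j)" and Anon: "\<forall>j<n. \<forall>t. A j t \<ge> 0"
    using sol unfolding is_solution_S_def by auto
  define D where "D = (\<Sum>j<n. tau0 j)"
  have D: "tau0 i \<le> D" if "i < n" for i
    unfolding D_def by (rule member_le_sum) (use that t0 less_imp_le in auto)
  have D0: "D \<ge> 0" unfolding D_def using t0 by (intro sum_nonneg) (auto simp: less_imp_le)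
  have "\<forall>j<n. \<exists>b. \<forall>M\<ge>b. \<forall>t\<in>{-D..0}. A j t \<le> M"
  proof (intro allI impI)
    fix j assume j: "j < n"
    obtain x where x: "x \<in> {-D..0}" "\<forall>y\<in>{-D..0}. A j y \<le> A j x"
    proof -
      have "continuous_on {-D..0} (A j)" using Acont j by (auto intro: continuous_on_subset)
      thus ?thesis using continuous_attains_sup[of "{-D..0}" "A j"] D0 that by auto
    qed
    show "\<exists>b. \<forall>M\<ge>b. \<forall>t\<in>{-D..0}. A j t \<le> M"
      using x by (intro exI[of _ "A j x"]) force
  qed
  from finite_bound[OF this] obtain \<Phi> where Phi0: "\<Phi> \<ge> 0"
    and Phi: "\<forall>j<n. \<forall>t\<in>{-D..0}. A j t \<le> \<Phi>" by blast
  have "\<forall>i<n. \<exists>b. \<forall>M\<ge>b. \<forall>ts>0. (\<forall>j<n. \<forall>s\<in>{0..<ts}. A j s < M) \<longrightarrow> M \<le> A i ts \<longrightarrow> \<Phi> < M \<longrightarrow> False"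
    using species[OF AA sol _ _ Phi0 Phi] t0 D by blast
  from finite_bound[OF this] obtain b where
    b: "\<forall>i<n. \<forall>M\<ge>b. \<forall>ts>0. (\<forall>j<n. \<forall>s\<in>{0..<ts}. A j s < M) \<longrightarrow> M \<le> A i ts \<longrightarrow> \<Phi> < M \<longrightarrow> False"
    by blast
  define M where "M = max b (\<Phi> + 1)"
  have bound: "\<forall>i<n. \<forall>t\<ge>0. A i t < M"
  proof (rule ccontr)
    assume neg: "\<not> (\<forall>i<n. \<forall>t\<ge>0. A i t < M)"
    define S where "S = {t. 0 \<le> t \<and> (\<exists>j<n. M \<le> A j t)}"
    have Sne: "S \<noteq> {}" using neg unfolding S_def by (auto simp: not_less) (meson not_le)
    have Sbdd: "bdd_below S" unfolding S_def by (rule bdd_belowI[of _ 0]) auto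
    have "S = {0..} \<inter> (\<Union>j\<in>{..<n}. {t. (\<lambda>_. M) t \<le> A j t})" unfolding S_def by auto
    moreover have "closed ({0..} \<inter> (\<Union>j\<in>{..<n}. {t. (\<lambda>_. M) t \<le> A j t}))"
      using Acont by (intro closed_Int closed_atLeast closed_UN ballI closed_Collect_le) auto
    ultimately have Scl: "closed S" by simp
    define ts where "ts = Inf S"
    have tsS: "ts \<in> S" unfolding ts_def by (rule closed_contains_Inf[OF Sne Sbdd Scl])
    then obtain i where i: "i < n" "M \<le> A i ts" and ts0: "ts \<ge> 0" unfolding S_def by auto
    have below: "\<forall>j<n. \<forall>s\<in>{0..<ts}. A j s < M"
    proof (intro allI impI ballI)
      fix j s assume j: "j < n" and s: "s \<in> {0..<ts}"
      show "A j s < M"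
      proof (rule ccontr)
        assume "\<not> A j s < M"
        hence "s \<in> S" using s j unfolding S_def by auto
        hence "ts \<le> s" unfolding ts_def by (rule cInf_lower[OF _ Sbdd])
        thus False using s by simp
      qed
    qed
    have "ts \<noteq> 0"
    proof
      assume "ts = 0"
      hence "A i 0 \<le> \<Phi>" using Phi i D0 by auto
      thus False using i \<open>ts = 0\<close> unfolding M_def by simp
    qed
    hence "ts > 0" using ts0 by simp
    moreover have "b \<le> M" "\<Phi> < M" unfolding M_def by auto
    ultimately show False using b i below by blast
  qed
  show ?thesis
    using bound Anon by (intro exI[of _ M]) (auto simp: less_imp_le)
qed

end
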